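(* Let $L$ be a list of sets, $F_t$, $F_c$, $F'$ families, $w$ a function from elements to $\mathbb{N}$ and $X$ a set. Suppose (i) $\mathrm{ssn\_aux}(L,F_t,F_c,w,X)=\mathrm{false}$; (ii) $\mathrm{ss}(A,w,X)<0$ for every entry $A$ of $L$; (iii) every $A\in F'\setminus F_t$ with $\mathrm{ss}(A,w,X)<0$ is an entry of $L$; (iv) $F_t\subseteq F'$; (v) $F'$ is union closed for $F_c$. Then $\mathrm{fs}(F',w,X)\ge 0$.
   Context: All sets and families are finite. A family $F$ is union closed if $A\cup B\in F$ for all $A,B\in F$; it is union closed for $F_c$ if it is union closed and $A\cup B\in F$ for all $A\in F$, $B\in F_c$. $\mathrm{sw}(w,A)=\sum_{a\in A}w(a)$; $\mathrm{ss}(A,w,X)=2\,\mathrm{sw}(w,A)-\mathrm{sw}(w,X)\in\mathbb{Z}$; $\mathrm{fs}(F,w,X)=\sum_{A\in F}\mathrm{ss}(A,w,X)$. For a family $G$ and a set $h$, $\mathrm{ica}_{G}(h,F) = F\cup\{h\}\cup\{h\cup B: B\in F\}\cup\{h\cup B: B\in G\}$. The function $\mathrm{ssn\_aux}(L,F_t,G,w,X)$ (boolean valued) is defined by recursion on the list $L$: $\mathrm{ssn\_aux}([\,],F_t,G,w,X) = (\mathrm{fs}(F_t,w,X)<0)$; and for $L = h\#t$: if $\mathrm{fs}(F_t,w,X)+\sum_{A \in h\#t}\mathrm{ss}(A,w,X)\ge 0$ (sum over list entries) then false; else if $\mathrm{ssn\_aux}(t,F_t,G,w,X)$ then true; else if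 $h\in F_t$ then false; else $\mathrm{ssn\_aux}(t,\mathrm{ica}_G(h,F_t),G,w,X)$. *)

theory Defs
  imports Main
begin

definition union_closed :: "'a set set \<Rightarrow> bool" where
  "union_closed F \<longleftrightarrow> (\<forall>A\<in>F. \<forall>B\<in>F. A \<union> B \<in> F)"

definition union_closed_for :: "'a set set \<Rightarrow> 'a set set \<Rightarrow> bool" where
  "union_closed_for F Fc \<longleftrightarrow> union_closed F \<and> (\<forall>A\<in>F. \<forall>B\<in>Fc. A \<union> B \<in> F)"

definition sw :: "('a \<Rightarrow> nat) \<Rightarrow> 'a set \<Rightarrow> nat" where
  "sw w A = (\<Sum>a\<in>A. w a)"

definition ss :: "'a set \<Rightarrow> ('a \<Rightarrow> nat) \<Rightarrow> 'a set \<Rightarrow> int" where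
  "ss A w X = 2 * int (sw w A) - int (sw w X)"

definition fs :: "'a set set \<Rightarrow> ('a \<Rightarrow> nat) \<Rightarrow> 'a set \<Rightarrow> int" where
  "fs F w X = (\<Sum>A\<in>F. ss A w X)"

definition ica :: "'a set set \<Rightarrow> 'a set \<Rightarrow> 'a set set \<Rightarrow> 'a set set" where
  "ica G h F = F \<union> {h} \<union> {h \<union> B | B. B \<in> F} \<union> {h \<union> B | B. B \<in> G}"

fun ssn_aux :: "'a set list \<Rightarrow> 'a set set \<Rightarrow> 'a set set \<Rightarrow> ('a \<Rightarrow> nat) \<Rightarrow> 'a set \<Rightarrow> bool" where
  "ssn_aux [] Ft G w X = (fs Ft w X < 0)"
| "ssn_aux (h # t) Ft G w X =
     (if fs Ft w X + (\<Sum>A\<leftarrow>h # t. ss A w X) \<ge> 0 then False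
      else if ssn_aux t Ft G w X then True
      else if h \<in> Ft then False
      else ssn_aux t (ica G h Ft) G w X)"

end

theory Submission
  imports Defs
begin

lemma sl_le_set:
  fixes f :: "'b \<Rightarrow> int"
  assumes "\<forall>x\<in>set xs. f x < 0"
  shows "sum_list (map f xs) \<le> sum f (set xs)"
  using assms
proof (induction xs)
  case Nil then show ?case by simp
next
  case (Cons x xs)
  show ?case
  proof (cases "x \<in> set xs")
    case True
    then have "set (x#xs) = set xs" by auto
    moreover have "f x < 0" using Cons.prems by simp
    ultimately show ?thesis using Cons by simp
  next
    case False
    then show ?thesis using Cons by (simp add: sum.insert)
  qed
qed

lemma key_ineq:
  assumes fin: "finite F'" and sub: "Ft \<subseteq> F'"
    and neg: "\<forall>A\<in>set L. ss A w X < 0"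
    and cov: "\<forall>A\<in>F' - Ft. ss A w X < 0 \<longrightarrow> A \<in> set L"
  shows "fs F' w X \<ge> fs Ft w X + (\<Sum>A\<leftarrow>L. ss A w X)"
proof -
  let ?f = "\<lambda>A. ss A w X"
  define S where "S = {A\<in>F' - Ft. ?f A < 0}"
  have finS: "finite S" using fin unfolding S_def by auto
  have e1: "fs F' w X = fs Ft w X + sum ?f (F' - Ft)"
    unfolding fs_def using sum.subset_diff[OF sub fin, of ?f] by simp
  have e2: "sum ?f S \<le> sum ?f (F' - Ft)"
    by (rule sum_mono2) (use fin in \<open>auto simp: S_def\<close>)
  have SL: "S \<subseteq> set L" using cov unfolding S_def by auto
  have "sum ?f (set L) = sum ?f S + sum ?f (set L - S)"
    using sum.subset_diff[OF SL, of ?f] by simp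
  moreover have "sum ?f (set L - S) \<le> 0"
    by (rule sum_nonpos) (use neg in auto)
  ultimately have e3: "sum ?f (set L) \<le> sum ?f S" by simp
  have e4: "(\<Sum>A\<leftarrow>L. ss A w X) \<le> sum ?f (set L)"
    using sl_le_set[of L ?f] neg by simp
  show ?thesis using e1 e2 e3 e4 by simp
qed

lemma main:
  assumes "finite F'"
    and "\<not> ssn_aux L Ft Fc w X"
    and "\<forall>A\<in>set L. ss A w X < 0"
    and "\<forall>A\<in>F' - Ft. ss A w X < 0 \<longrightarrow> A \<in> set L"
    and "Ft \<subseteq> F'"
    and "union_closed_for F' Fc"
  shows "fs F' w X \<ge> 0"
  using assms
proof (induction L arbitrary: Ft)
  case Nil
  then show ?case using key_ineq[of F' Ft "[]" w X] by simp
next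
  case (Cons h t)
  show ?case
  proof (cases "fs Ft w X + (\<Sum>A\<leftarrow>h # t. ss A w X) \<ge> 0")
    case True
    then show ?thesis using key_ineq[of F' Ft "h#t" w X] Cons.prems by simp
  next
    case False
    then have nt: "\<not> ssn_aux t Ft Fc w X" using Cons.prems(2) by (auto split: if_splits)
    show ?thesis
    proof (cases "h \<in> F' \<and> h \<notin> Ft")
      case True
      then have n2: "\<not> ssn_aux t (ica Fc h Ft) Fc w X"
        using Cons.prems(2) False nt by (auto split: if_splits)
      have sub2: "ica Fc h Ft \<subseteq> F'"
        using True Cons.prems(5,6)
        unfolding ica_def union_closed_for_def union_closed_def by blast
      have cov2: "\<forall>A\<in>F' - ica Fc h Ft. ss A w X < 0 \<longrightarrow> A \<in> set t"
        using Cons.prems(4) unfolding ica_def by auto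
      show ?thesis
        by (rule Cons.IH[OF Cons.prems(1) n2 _ cov2 sub2 Cons.prems(6)])
           (use Cons.prems(3) in auto)
    next
      case False
      have cov2: "\<forall>A\<in>F' - Ft. ss A w X < 0 \<longrightarrow> A \<in> set t"
        using Cons.prems(4) False by auto
      show ?thesis
        by (rule Cons.IH[OF Cons.prems(1) nt _ cov2 Cons.prems(5) Cons.prems(6)])
           (use Cons.prems(3) in auto)
    qed
  qed
qed

theorem lemma5:
  fixes L :: "'a set list" and Ft Fc F' :: "'a set set"
    and w :: "'a \<Rightarrow> nat" and X :: "'a set"
  assumes "finite F'" and "\<forall>A\<in>F'. finite A" and "finite X"
    and "finite Fc" and "\<forall>A\<in>Fc. finite A" and "\<forall>A\<in>set L. finite A"
    and "\<not> ssn_aux L Ft Fc w X"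
    and "\<forall>A\<in>set L. ss A w X < 0"
    and "\<forall>A\<in>F' - Ft. ss A w X < 0 \<longrightarrow> A \<in> set L"
    and "Ft \<subseteq> F'"
    and "union_closed_for F' Fc"
  shows "fs F' w X \<ge> 0"
  using main[OF assms(1,7,8,9,10,11)] .

end
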